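(* There exist $R>0$ and $\upsilon\in(0,1)$, independent of $t$, such that for every $t>0$ there is a closed, real, positive $(1,1)$-form $\check\omega_t$ on $\tilde X$ satisfying: (1) $\check\omega_t=\tilde\omega_t$ on $\{p\in\tilde X: r(p)\le tR/2\}$; (2) $\check\omega_t=\hat\omega$ on a neighbourhood of $\{p\in\tilde X: r(p)\ge tR\}$; (3) $\check\omega_t^2\ge 2\upsilon^2\,\mathrm{vol}_0$ on $\tilde X\setminus\mathfrak{E}$, with equality holding at least on $\{p: r(p)=\mathfrak{r}_t\}$ for some $\mathfrak{r}_t\in(tR/2,tR)$.
   Context: Let $\tilde X=\{((U^1,U^2),[W^1:W^2])\in\mathbb{C}^2\times\mathbb{CP}^1: U^1(W^2)^2=U^2(W^1)^2\}\cong T^*\mathbb{CP}^1$, a complex surface, with the blow-down map $\rho:\tilde X\to\mathbb{C}^2/\{\pm1\}$, $((U^1,U^2),[W^1:W^2])\mapsto\pm(\sqrt{U^1},\sqrt{U^2})$ (square roots chosen with $\sqrt{U^1}W^2=\sqrt{U^2}W^1$); $\mathfrak{E}=\rho^{-1}(0)\cong\mathbb{CP}^1$, and $\rho$ identifies $\tilde X\setminus\mathfrak E$ biholomorphically with $(\mathbb{C}^2/\{\pm1\})\setminus\{0\}$. On $\mathbb{C}^2$ with coordinates $w^1=x^1+iy^1$, $w^2=x^2+iy^2$, put $r^2=|w^1|^2+|w^2|^2$ (pulled back to $\tilde X$ via $\rho$, with $r=0$ on $\mathfrak E$), $\hat\omega=\frac i2(dw^1\wedge d\bar w^1+dw^2\wedge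 d\bar w^2)$, $\mathrm{vol}_0=dx^1\wedge dy^1\wedge dx^2\wedge dy^2$. The Eguchi--Hanson forms are $\tilde\omega_t=\frac14dd^c\big[\sqrt{r^4+t^4}+t^2\log\big(\frac{r^2}{\sqrt{r^4+t^4}+t^2}\big)\big]$ on $\tilde X\setminus\mathfrak E$, where $d^c=i(\bar\partial-\partial)$; each $\tilde\omega_t$ ($t>0$) extends smoothly over $\mathfrak E$ to a Ricci-flat Kähler form on $\tilde X$. *)

theory Defs
  imports "HOL-Analysis.Analysis"
begin

text \<open>
Points of C^2 are vectors w :: complex^2 with coordinates w$1, w$2;
norm w = sqrt(|w1|^2 + |w2|^2) = r.  A (1,1)-form on an open subset of C^2 is
represented by its coefficient matrix H :: complex^2 \<Rightarrow> complex^2^2, meaning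
   omega = (i/2) * sum_{j,k} H(w)$j$k dw^j \<and> d(conj w^k).
With this convention the flat form hat-omega has coefficient matrix mat 1, and
(1/4) dd^c phi has coefficient matrix (d_j dbar_k phi).
The manifold X~ minus the exceptional curve E is identified (via rho) with
(C^2 - {0})/{+-1}; forms on it are the forms on C^2 - {0} invariant under w \<mapsto> -w.
\<close>

fun iter_dd :: "('a::real_normed_vector \<Rightarrow> 'b::real_normed_vector) \<Rightarrow> 'a list \<Rightarrow> 'a \<Rightarrow> 'b" where
  "iter_dd f [] = f"
| "iter_dd f (v # vs) = (\<lambda>x. frechet_derivative (iter_dd f vs) (at x) v)"

definition smooth_on :: "'a::real_normed_vector set \<Rightarrow> ('a \<Rightarrow> 'b::real_normed_vector) \<Rightarrow> bool" where
  "smooth_on S f \<longleftrightarrow> open S \<and> (\<forall>vs. \<forall>x\<in>S. iter_dd f vs differentiable (at x))"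

definition wirt :: "2 \<Rightarrow> (complex^2 \<Rightarrow> complex) \<Rightarrow> complex^2 \<Rightarrow> complex" where
  "wirt j f x = (frechet_derivative f (at x) (axis j 1)
                 - \<i> * frechet_derivative f (at x) (axis j \<i>)) / 2"

definition wirtbar :: "2 \<Rightarrow> (complex^2 \<Rightarrow> complex) \<Rightarrow> complex^2 \<Rightarrow> complex" where
  "wirtbar j f x = (frechet_derivative f (at x) (axis j 1)
                    + \<i> * frechet_derivative f (at x) (axis j \<i>)) / 2"

text \<open>Coefficient matrix of (1/4) dd^c phi, d^c = i(dbar - d): entries d_j dbar_k phi.\<close>
definition quarter_ddc :: "(complex^2 \<Rightarrow> real) \<Rightarrow> complex^2 \<Rightarrow> complex^2^2" where
  "quarter_ddc \<phi> x = (\<chi> j k. wirt j (wirtbar k (\<lambda>y. complex_of_real (\<phi> y))) x)"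

text \<open>Smooth, closed (1,1)-form on the open set S.  For
omega = (i/2) sum H_jk dw^j \<and> dbar w^k one has d omega = 0 iff
d_l H_jk = d_j H_lk and dbar_l H_jk = dbar_k H_jl for all j, k, l.\<close>
definition closed_form11_on :: "(complex^2) set \<Rightarrow> (complex^2 \<Rightarrow> complex^2^2) \<Rightarrow> bool" where
  "closed_form11_on S H \<longleftrightarrow>
     (\<forall>j k. smooth_on S (\<lambda>x. H x $ j $ k)) \<and>
     (\<forall>x\<in>S. \<forall>j k l. wirt l (\<lambda>y. H y $ j $ k) x = wirt j (\<lambda>y. H y $ l $ k) x
                 \<and> wirtbar l (\<lambda>y. H y $ j $ k) x = wirtbar k (\<lambda>y. H y $ j $ l) x)"

definition real_form11_on :: "(complex^2) set \<Rightarrow> (complex^2 \<Rightarrow> complex^2^2) \<Rightarrow> bool" where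
  "real_form11_on S H \<longleftrightarrow> (\<forall>x\<in>S. \<forall>j k. H x $ j $ k = cnj (H x $ k $ j))"

definition positive_form11_on :: "(complex^2) set \<Rightarrow> (complex^2 \<Rightarrow> complex^2^2) \<Rightarrow> bool" where
  "positive_form11_on S H \<longleftrightarrow>
     (\<forall>x\<in>S. \<forall>v::complex^2. v \<noteq> 0 \<longrightarrow>
         0 < Re (\<Sum>j\<in>UNIV. \<Sum>k\<in>UNIV. H x $ j $ k * v $ j * cnj (v $ k)))"

text \<open>Invariance under the deck transformation w \<mapsto> -w (so the form descends to
(C^2 - {0})/{+-1} = X~ - E).\<close>
definition pm_invariant :: "(complex^2 \<Rightarrow> complex^2^2) \<Rightarrow> bool" where
  "pm_invariant H \<longleftrightarrow> (\<forall>x. x \<noteq> 0 \<longrightarrow> H (- x) = H x)"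

text \<open>omega \<and> omega = wedge_sq_ratio H x * vol_0 at x, where
vol_0 = dx1 \<and> dy1 \<and> dx2 \<and> dy2 and omega = (i/2) sum H_jk dw^j \<and> dbar w^k.\<close>
definition wedge_sq_ratio :: "(complex^2 \<Rightarrow> complex^2^2) \<Rightarrow> complex^2 \<Rightarrow> real" where
  "wedge_sq_ratio H x = 2 * Re (det (H x))"

definition EH_potential :: "real \<Rightarrow> complex^2 \<Rightarrow> real" where
  "EH_potential t w = sqrt (norm w ^ 4 + t ^ 4)
      + t\<^sup>2 * ln (norm w ^ 2 / (sqrt (norm w ^ 4 + t ^ 4) + t\<^sup>2))"

definition EH_form :: "real \<Rightarrow> complex^2 \<Rightarrow> complex^2^2" where
  "EH_form t = quarter_ddc (EH_potential t)"

definition flat_form :: "complex^2 \<Rightarrow> complex^2^2" where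
  "flat_form x = mat 1"

end

theory Submission
  imports Defs "HOL-Computational_Algebra.Polynomial"
begin


definition dclosed :: "real set \<Rightarrow> (real \<Rightarrow> real) set \<Rightarrow> bool" where
  "dclosed D K \<longleftrightarrow> (\<forall>f\<in>K. \<exists>f'\<in>K. \<forall>x\<in>D. (f has_real_derivative f' x) (at x))"

inductive_set alg :: "(real \<Rightarrow> real) set \<Rightarrow> (real \<Rightarrow> real) set" for G where
  alg_const: "(\<lambda>x. c) \<in> alg G"
| alg_gen: "g \<in> G \<Longrightarrow> g \<in> alg G"
| alg_add: "f \<in> alg G \<Longrightarrow> g \<in> alg G \<Longrightarrow> (\<lambda>x. f x + g x) \<in> alg G"
| alg_mult: "f \<in> alg G \<Longrightarrow> g \<in> alg G \<Longrightarrow> (\<lambda>x. f x * g x) \<in> alg G"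

lemma alg_diff: "f \<in> alg G \<Longrightarrow> g \<in> alg G \<Longrightarrow> (\<lambda>x. f x - g x) \<in> alg G"
proof -
  assume f: "f \<in> alg G" and g: "g \<in> alg G"
  have "(\<lambda>x. f x + (\<lambda>x. -1) x * g x) \<in> alg G"
    by (intro alg_add alg_mult alg_const f g)
  thus ?thesis by simp
qed

lemma alg_dclosed:
  assumes "\<And>g. g \<in> G \<Longrightarrow> \<exists>g'\<in>alg G. \<forall>x\<in>D. (g has_real_derivative g' x) (at x)"
  shows "dclosed D (alg G)"
  unfolding dclosed_def
proof
  fix f assume "f \<in> alg G"
  then show "\<exists>f'\<in>alg G. \<forall>x\<in>D. (f has_real_derivative f' x) (at x)"
  proof induction
    case (alg_const c)
    show ?case by (rule bexI[of _ "\<lambda>x. 0"]) (auto intro: alg.alg_const)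
  next
    case (alg_gen g) thus ?case using assms by blast
  next
    case (alg_add f g)
    then obtain f' g' where "f' \<in> alg G" "g' \<in> alg G"
      "\<forall>x\<in>D. (f has_real_derivative f' x) (at x)" "\<forall>x\<in>D. (g has_real_derivative g' x) (at x)" by blast
    thus ?case by (intro bexI[of _ "\<lambda>x. f' x + g' x"]) (auto intro: alg.alg_add derivative_eq_intros)
  next
    case (alg_mult f g)
    then obtain f' g' where "f' \<in> alg G" "g' \<in> alg G"
      "\<forall>x\<in>D. (f has_real_derivative f' x) (at x)" "\<forall>x\<in>D. (g has_real_derivative g' x) (at x)" by blast
    thus ?case using alg_mult.hyps
      by (intro bexI[of _ "\<lambda>x. f x * g' x + f' x * g x"])
         (auto intro!: alg.alg_add alg.alg_mult derivative_eq_intros)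
  qed
qed

definition ef :: "real poly \<Rightarrow> real \<Rightarrow> real" where
  "ef p x = (if x > 0 then poly p (1/x) * exp (-(1/x)) else 0)"

definition eq :: "real poly \<Rightarrow> real poly" where
  "eq p = [:0,0,1:] * (p - pderiv p)"

lemma ef_tendsto0: "(ef p \<longlongrightarrow> 0) (at_right 0)"
proof -
  have lim: "((\<lambda>y. poly p y * exp (- y)) \<longlongrightarrow> 0) at_top"
  proof -
    have "((\<lambda>y. \<Sum>i\<le>degree p. coeff p i * (y ^ i / exp y)) \<longlongrightarrow> (\<Sum>i\<le>degree p. coeff p i * 0)) at_top"
      by (intro tendsto_sum tendsto_mult tendsto_const tendsto_power_div_exp_0)
    moreover have "\<And>y. (\<Sum>i\<le>degree p. coeff p i * (y ^ i / exp y)) = poly p y * exp (- y)"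
      by (simp add: poly_altdef sum_divide_distrib[symmetric] exp_minus field_simps)
    ultimately show ?thesis by simp
  qed
  have "((\<lambda>x. poly p (inverse x) * exp (- inverse x)) \<longlongrightarrow> 0) (at_right 0)"
    using filterlim_compose[OF lim filterlim_inverse_at_top_right] by (simp add: o_def)
  moreover have "eventually (\<lambda>x. poly p (inverse x) * exp (- inverse x) = ef p x) (at_right 0)"
    unfolding eventually_at_right_field ef_def
    by (rule exI[of _ 1]) (auto simp: divide_inverse)
  ultimately show ?thesis by (rule Lim_transform_eventually)
qed

lemma ef_deriv: "(ef p has_real_derivative ef (eq p) x) (at x)"
proof -
  consider "x > 0" | "x < 0" | "x = 0" by linarith
  then show ?thesis
  proof cases
    case 1
    have d1: "((\<lambda>x. poly p (1/x)) has_real_derivative poly (pderiv p) (1/x) * (- 1 / x^2)) (at x)"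
      using 1 by (intro DERIV_chain2[OF poly_DERIV]) (auto intro!: derivative_eq_intros simp: power2_eq_square)
    have "((\<lambda>x. poly p (1/x) * exp (-(1/x))) has_real_derivative
        poly (pderiv p) (1/x) * (- 1 / x^2) * exp (-(1/x)) + poly p (1/x) * (exp (-(1/x)) * (1/x^2))) (at x)"
      using 1 by (intro derivative_eq_intros d1 refl) (auto simp: power2_eq_square)
    moreover have "poly (pderiv p) (1/x) * (- 1 / x^2) * exp (-(1/x)) + poly p (1/x) * (exp (-(1/x)) * (1/x^2))
        = ef (eq p) x"
      using 1 by (simp add: ef_def eq_def algebra_simps power2_eq_square)
    ultimately have "((\<lambda>x. poly p (1/x) * exp (-(1/x))) has_real_derivative ef (eq p) x) (at x)" by simp
    then show ?thesis
      by (rule has_field_derivative_transform_within_open[where S="{0<..}"]) (use 1 in \<open>auto simp: ef_def\<close>)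
  next
    case 2
    have "((\<lambda>x. 0) has_real_derivative 0) (at x)" by simp
    then have "(ef p has_real_derivative 0) (at x)"
      by (rule has_field_derivative_transform_within_open[where S="{..<0}"]) (use 2 in \<open>auto simp: ef_def\<close>)
    then show ?thesis using 2 by (simp add: ef_def)
  next
    case 3
    have r: "((\<lambda>h. (ef p (0 + h) - ef p 0) / h) \<longlongrightarrow> 0) (at_right 0)"
    proof -
      have "eventually (\<lambda>h. ef (p * [:0,1:]) h = (ef p (0 + h) - ef p 0) / h) (at_right 0)"
        unfolding eventually_at_right_field
        by (rule exI[of _ 1]) (auto simp: ef_def field_simps)
      thus ?thesis using ef_tendsto0[of "p * [:0,1:]"] by (rule Lim_transform_eventually[rotated])
    qed
    have l: "((\<lambda>h. (ef p (0 + h) - ef p 0) / h) \<longlongrightarrow> 0) (at_left 0)"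
    proof -
      have "eventually (\<lambda>h. 0 = (ef p (0 + h) - ef p 0) / h) (at_left 0)"
        unfolding eventually_at_left_field
        by (rule exI[of _ "-1"]) (auto simp: ef_def)
      thus ?thesis by (rule Lim_transform_eventually[rotated]) simp
    qed
    have "(ef p has_real_derivative 0) (at 0)"
      unfolding DERIV_def by (rule filterlim_split_at[OF l r])
    then show ?thesis using 3 by (simp add: ef_def)
  qed
qed


definition den :: "real \<Rightarrow> real" where "den x = ef 1 x + ef 1 (1 - x)"

lemma den_pos: "den x > 0"
  unfolding den_def ef_def by (cases "x > 0") (auto intro: add_pos_pos)

definition Gchi :: "(real \<Rightarrow> real) set" where
  "Gchi = range ef \<union> range (\<lambda>p x. ef p (1 - x)) \<union> {\<lambda>x. 1 / den x}"

lemma dclosed_chi: "dclosed UNIV (alg Gchi)"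
proof (rule alg_dclosed)
  fix g assume "g \<in> Gchi"
  then consider p where "g = ef p" | p where "g = (\<lambda>x. ef p (1 - x))" | "g = (\<lambda>x. 1 / den x)"
    unfolding Gchi_def by blast
  then show "\<exists>g'\<in>alg Gchi. \<forall>x\<in>UNIV. (g has_real_derivative g' x) (at x)"
  proof cases
    case 1
    show ?thesis unfolding 1
      by (rule bexI[of _ "ef (eq p)"]) (auto intro: ef_deriv alg_gen simp: Gchi_def)
  next
    case 2
    have m: "(\<lambda>x. (\<lambda>x. -1) x * (\<lambda>x. ef (eq p) (1 - x)) x) \<in> alg Gchi"
      by (intro alg_mult alg_const alg_gen) (auto simp: Gchi_def)
    have "((\<lambda>x. ef p (1 - x)) has_real_derivative ef (eq p) (1-x) * (-1)) (at x)" for x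
      by (rule DERIV_chain2[OF ef_deriv]) (auto intro!: derivative_eq_intros)
    then show ?thesis unfolding 2
      by (intro bexI[OF _ m]) auto
  next
    case 3
    let ?q = "eq 1"
    have m: "(\<lambda>x. (\<lambda>x. -1) x * ((\<lambda>x. (\<lambda>x. ef ?q x) x - (\<lambda>x. ef ?q (1 - x)) x) x *
               ((\<lambda>x. 1 / den x) x * (\<lambda>x. 1 / den x) x))) \<in> alg Gchi"
      by (intro alg_mult alg_const alg_diff alg_gen) (auto simp: Gchi_def)
    have e2: "((\<lambda>x. ef 1 (1 - x)) has_real_derivative ef ?q (1-x) * (-1)) (at x)" for x
      by (rule DERIV_chain2[OF ef_deriv]) (auto intro!: derivative_eq_intros)
    have dd: "(den has_real_derivative (ef ?q x - ef ?q (1 - x))) (at x)" for x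
      unfolding den_def[abs_def]
      using DERIV_add[OF ef_deriv e2] by simp
    show ?thesis unfolding 3
      apply (rule bexI[OF _ m])
      using den_pos
      apply (auto intro!: derivative_eq_intros dd simp: power2_eq_square field_simps)
      apply (metis less_irrefl)
      done
  qed
qed

definition chi :: "real \<Rightarrow> real" where "chi x = ef 1 x * (1 / den x)"

lemma chi_alg: "chi \<in> alg Gchi"
proof -
  have "(\<lambda>x. (ef 1) x * (\<lambda>x. 1 / den x) x) \<in> alg Gchi"
    by (intro alg_mult alg_gen) (auto simp: Gchi_def)
  thus ?thesis unfolding chi_def[abs_def] by simp
qed

lemma chi_0: "x \<le> 0 \<Longrightarrow> chi x = 0"
  by (simp add: chi_def ef_def)

lemma chi_1: "x \<ge> 1 \<Longrightarrow> chi x = 1"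
  using den_pos[of x] by (simp add: chi_def ef_def den_def)

lemma chi_range: "0 \<le> chi x \<and> chi x \<le> 1"
  using den_pos[of x] by (auto simp: chi_def ef_def den_def field_simps)



definition chid :: "real \<Rightarrow> real" where
  "chid = (SOME f. f \<in> alg Gchi \<and> (\<forall>x. (chi has_real_derivative f x) (at x)))"

lemma chid: "chid \<in> alg Gchi \<and> (\<forall>x. (chi has_real_derivative chid x) (at x))"
proof -
  have "\<exists>f. f \<in> alg Gchi \<and> (\<forall>x. (chi has_real_derivative f x) (at x))"
    using dclosed_chi chi_alg unfolding dclosed_def by blast
  then show ?thesis unfolding chid_def by (rule someI_ex)
qed

lemma chi_deriv: "(chi has_real_derivative chid x) (at x)" using chid by blast

lemma chid_cont: "isCont chid x"
proof -
  obtain f where "\<forall>x. (chid has_real_derivative f x) (at x)"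
    using dclosed_chi chid unfolding dclosed_def by blast
  thus ?thesis using DERIV_isCont by blast
qed

lemma chi_cont: "isCont chi x" using chi_deriv DERIV_isCont by blast

lemma chid_out: assumes "x < 0 \<or> x > 1" shows "chid x = 0"
proof -
  have "(chi has_real_derivative 0) (at x)"
  proof (cases "x < 0")
    case True
    have "((\<lambda>x. 0) has_real_derivative 0) (at x)" by simp
    thus ?thesis
      by (rule has_field_derivative_transform_within_open[where S="{..<0}"]) (use True chi_0 in auto)
  next
    case False
    hence "x > 1" using assms by auto
    have "((\<lambda>x. 1) has_real_derivative 0) (at x)" by simp
    thus ?thesis
      by (rule has_field_derivative_transform_within_open[where S="{1<..}"]) (use \<open>x>1\<close> chi_1 in auto)
  qed
  thus ?thesis using chi_deriv DERIV_unique by blast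
qed

lemma chid_bound: "\<exists>M\<ge>0. \<forall>x. \<bar>chid x\<bar> \<le> M"
proof -
  have "compact (chid ` {0..1})"
    by (intro compact_continuous_image continuous_at_imp_continuous_on) (auto intro: chid_cont)
  then obtain M where M: "\<forall>y\<in>chid ` {0..1}. norm y \<le> M"
    using compact_imp_bounded bounded_iff by blast
  have "\<bar>chid x\<bar> \<le> max M 0" for x
  proof (cases "x < 0 \<or> x > 1")
    case True thus ?thesis using chid_out by simp
  next
    case False
    hence "x \<in> {0..1}" by auto
    hence "\<bar>chid x\<bar> \<le> M" using M by auto
    thus ?thesis by simp
  qed
  thus ?thesis by (intro exI[of _ "max M 0"]) auto
qed

definition Mchi :: real where "Mchi = (SOME M. M \<ge> 0 \<and> (\<forall>x. \<bar>chid x\<bar> \<le> M))"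

lemma Mchi: "Mchi \<ge> 0" "\<bar>chid x\<bar> \<le> Mchi"
  using someI_ex[OF chid_bound[unfolded Bex_def[symmetric]]] unfolding Mchi_def
  by auto

definition Gal :: "real \<Rightarrow> (real \<Rightarrow> real) set" where
  "Gal A = {\<lambda>s. s, \<lambda>s. 1 / s, \<lambda>s. sqrt (s\<^sup>2 + 1), \<lambda>s. 1 / sqrt (s\<^sup>2 + 1)}
     \<union> {\<lambda>s. k ((s - A) / A) | k. k \<in> alg Gchi}"

lemma sqrt_deriv: "((\<lambda>s. sqrt (s\<^sup>2 + 1)) has_real_derivative s * (1 / sqrt (s\<^sup>2 + 1))) (at s)"
proof -
  have "0 < s\<^sup>2 + 1" using zero_le_power2[of s] by linarith
  then show ?thesis
    by (auto intro!: derivative_eq_intros simp: field_simps)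
qed

lemma dclosed_Gal:
  assumes A: "A > 0"
  shows "dclosed {0<..} (alg (Gal A))"
proof (rule alg_dclosed)
  fix g assume "g \<in> Gal A"
  then consider "g = (\<lambda>s. s)" | "g = (\<lambda>s. 1/s)" | "g = (\<lambda>s. sqrt (s\<^sup>2 + 1))"
    | "g = (\<lambda>s. 1 / sqrt (s\<^sup>2 + 1))" | k where "k \<in> alg Gchi" "g = (\<lambda>s. k ((s - A) / A))"
    unfolding Gal_def by blast
  then show "\<exists>g'\<in>alg (Gal A). \<forall>x\<in>{0<..}. (g has_real_derivative g' x) (at x)"
  proof cases
    case 1 thus ?thesis by (intro bexI[of _ "\<lambda>x. 1"]) (auto intro: alg_const)
  next
    case 2
    have m: "(\<lambda>x. (\<lambda>x. -1) x * ((\<lambda>s. 1/s) x * (\<lambda>s. 1/s) x)) \<in> alg (Gal A)"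
      by (intro alg_mult alg_const alg_gen) (auto simp: Gal_def)
    show ?thesis unfolding 2
      by (rule bexI[OF _ m]) (auto intro!: derivative_eq_intros simp: power2_eq_square)
  next
    case 3
    have m: "(\<lambda>x. (\<lambda>s. s) x * (\<lambda>s. 1 / sqrt (s\<^sup>2 + 1)) x) \<in> alg (Gal A)"
      by (intro alg_mult alg_const alg_gen) (auto simp: Gal_def)
    show ?thesis unfolding 3
      by (rule bexI[OF _ m]) (use sqrt_deriv in auto)
  next
    case 4
    let ?v = "\<lambda>s. 1 / sqrt (s\<^sup>2 + 1)"
    have m: "(\<lambda>x. (\<lambda>x. -1) x * ((\<lambda>s. s) x * (?v x * (?v x * ?v x)))) \<in> alg (Gal A)"
      by (intro alg_mult alg_const alg_gen) (auto simp: Gal_def)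
    have "(?v has_real_derivative -1 * (x * (?v x * (?v x * ?v x)))) (at x)" for x
    proof -
      have p: "0 < x\<^sup>2 + 1" using zero_le_power2[of x] by linarith
      have sp: "sqrt (x\<^sup>2 + 1) \<noteq> 0" using p by simp
      have d: "((\<lambda>s. inverse (sqrt (s\<^sup>2 + 1))) has_real_derivative
          - ((x * (1 / sqrt (x\<^sup>2 + 1))) * inverse ((sqrt (x\<^sup>2 + 1)) ^ Suc (Suc 0)))) (at x)"
        by (rule DERIV_inverse_fun[OF sqrt_deriv sp])
      have e: "- ((x * (1 / sqrt (x\<^sup>2 + 1))) * inverse ((sqrt (x\<^sup>2 + 1)) ^ Suc (Suc 0)))
          = -1 * (x * (?v x * (?v x * ?v x)))"
        using p by (simp add: field_simps power2_eq_square)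
      show ?thesis using d unfolding e unfolding inverse_eq_divide .
    qed
    then show ?thesis unfolding 4
      by (intro bexI[OF _ m]) auto
  next
    case 5
    obtain k' where k': "k' \<in> alg Gchi" "\<forall>x. (k has_real_derivative k' x) (at x)"
      using dclosed_chi 5(1) unfolding dclosed_def by blast
    have m: "(\<lambda>x. (\<lambda>x. 1/A) x * (\<lambda>s. k' ((s - A) / A)) x) \<in> alg (Gal A)"
      by (intro alg_mult alg_const alg_gen) (use k' in \<open>auto simp: Gal_def\<close>)
    have "((\<lambda>s. k ((s - A) / A)) has_real_derivative k' ((x - A) / A) * (1/A)) (at x)" for x
      by (rule DERIV_chain2[of k]) (use k' A in \<open>auto intro!: derivative_eq_intros\<close>)
    then show ?thesis unfolding 5
      by (intro bexI[OF _ m]) (auto simp: mult.commute)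
  qed
qed

definition gfun :: "real \<Rightarrow> real \<Rightarrow> real" where
  "gfun A s = s + (1 - chi ((s - A) / A)) * (sqrt (s\<^sup>2 + 1) - s)"

definition alpha :: "real \<Rightarrow> real \<Rightarrow> real" where
  "alpha A s = gfun A s * (1 / s)"

lemma alpha_alg: "alpha A \<in> alg (Gal A)"
proof -
  have "(\<lambda>s. ((\<lambda>s. s) s + ((\<lambda>s. 1) s - (\<lambda>s. chi ((s - A) / A)) s) *
       ((\<lambda>s. sqrt (s\<^sup>2 + 1)) s - (\<lambda>s. s) s)) * (\<lambda>s. 1 / s) s) \<in> alg (Gal A)"
    by (intro alg_mult alg_add alg_diff alg_const alg_gen) (auto simp: Gal_def intro: chi_alg)
  thus ?thesis unfolding alpha_def[abs_def] gfun_def by simp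
qed

definition alpha1 :: "real \<Rightarrow> real \<Rightarrow> real" where
  "alpha1 A = (SOME f. f \<in> alg (Gal A) \<and> (\<forall>x>0. (alpha A has_real_derivative f x) (at x)))"
definition alpha2 :: "real \<Rightarrow> real \<Rightarrow> real" where
  "alpha2 A = (SOME f. f \<in> alg (Gal A) \<and> (\<forall>x>0. (alpha1 A has_real_derivative f x) (at x)))"

lemma alpha1: assumes "A > 0"
  shows "alpha1 A \<in> alg (Gal A) \<and> (\<forall>x>0. (alpha A has_real_derivative alpha1 A x) (at x))"
proof -
  have "\<exists>f. f \<in> alg (Gal A) \<and> (\<forall>x>0. (alpha A has_real_derivative f x) (at x))"
  proof -
    obtain f where "f \<in> alg (Gal A)" "\<forall>x\<in>{0<..}. (alpha A has_real_derivative f x) (at x)"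
      using dclosed_Gal[OF assms] alpha_alg unfolding dclosed_def by blast
    thus ?thesis by auto
  qed
  then show ?thesis unfolding alpha1_def by (rule someI_ex)
qed

lemma alpha2: assumes "A > 0"
  shows "alpha2 A \<in> alg (Gal A) \<and> (\<forall>x>0. (alpha1 A has_real_derivative alpha2 A x) (at x))"
proof -
  have "\<exists>f. f \<in> alg (Gal A) \<and> (\<forall>x>0. (alpha1 A has_real_derivative f x) (at x))"
  proof -
    obtain f where "f \<in> alg (Gal A)" "\<forall>x\<in>{0<..}. (alpha1 A has_real_derivative f x) (at x)"
      using dclosed_Gal[OF assms] alpha1[OF assms] unfolding dclosed_def by blast
    thus ?thesis by auto
  qed
  then show ?thesis unfolding alpha2_def by (rule someI_ex)
qed

definition G1 :: "real \<Rightarrow> real \<Rightarrow> real" where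
  "G1 A s = 1 - (chid ((s - A) / A) / A) * (sqrt (s\<^sup>2 + 1) - s)
     - (1 - chi ((s - A) / A)) * (1 - s / sqrt (s\<^sup>2 + 1))"

lemma gfun_deriv: assumes "A > 0" shows "(gfun A has_real_derivative G1 A s) (at s)"
proof -
  have c: "((\<lambda>s. chi ((s - A) / A)) has_real_derivative chid ((s - A) / A) * (1 / A)) (at s)"
    by (rule DERIV_chain2[OF chi_deriv]) (use assms in \<open>auto intro!: derivative_eq_intros\<close>)
  have p: "0 < s\<^sup>2 + 1" using zero_le_power2[of s] by linarith
  have "(gfun A has_real_derivative 1 + ((0 - chid ((s - A) / A) * (1 / A)) * (sqrt (s\<^sup>2 + 1) - s)
        + (s * (1 / sqrt (s\<^sup>2 + 1)) - 1) * (1 - chi ((s - A) / A)))) (at s)"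
    unfolding gfun_def[abs_def]
    by (intro DERIV_add DERIV_ident DERIV_mult DERIV_diff DERIV_const c sqrt_deriv)
  moreover have "1 + ((0 - chid ((s - A) / A) * (1 / A)) * (sqrt (s\<^sup>2 + 1) - s)
        + (s * (1 / sqrt (s\<^sup>2 + 1)) - 1) * (1 - chi ((s - A) / A))) = G1 A s"
    unfolding G1_def by (simp add: algebra_simps)
  ultimately show ?thesis by simp
qed

lemma alpha_G1: assumes "A > 0" "s > 0"
  shows "alpha A s + s * alpha1 A s = G1 A s"
proof -
  have "((\<lambda>s. s * alpha A s) has_real_derivative 1 * alpha A s + s * alpha1 A s) (at s)"
    using alpha1[OF assms(1)] assms(2) by (auto intro!: derivative_eq_intros)
  moreover have "((\<lambda>s. s * alpha A s) has_real_derivative G1 A s) (at s)"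
    by (rule has_field_derivative_transform_within_open[OF gfun_deriv[OF assms(1)], where S="{0<..}"])
       (use assms in \<open>auto simp: alpha_def\<close>)
  ultimately show ?thesis using DERIV_unique by fastforce
qed



definition Ac :: real where "Ac = Mchi + 2"

lemma Ac: "Ac \<ge> 2" "Mchi \<le> Ac - 2" using Mchi unfolding Ac_def by auto

lemma sq1_pos[simp]: "0 < (s::real)\<^sup>2 + 1" using zero_le_power2[of s] by linarith
lemma sq1_ne[simp]: "(s::real)\<^sup>2 + 1 \<noteq> 0" using sq1_pos[of s] by linarith
lemma sqrt1_pos[simp]: "0 < sqrt ((s::real)\<^sup>2 + 1)" by simp

lemma u_facts: assumes "s > 0"
  shows "sqrt (s\<^sup>2 + 1) > s" "sqrt (s\<^sup>2 + 1) \<ge> 1" "sqrt (s\<^sup>2 + 1) - s \<le> 1 / (2 * s)"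
proof -
  let ?u = "sqrt (s\<^sup>2 + 1)"
  have u2: "?u\<^sup>2 = s\<^sup>2 + 1" using zero_le_power2[of s] by simp
  have "s < ?u" using assms by (intro real_less_rsqrt) simp
  thus "?u > s" .
  show "?u \<ge> 1" using zero_le_power2[of s] by simp
  have "(?u - s) * (?u + s) = 1" using u2 by (simp add: algebra_simps power2_eq_square)
  moreover have "?u + s \<ge> 2 * s" using \<open>s < ?u\<close> by simp
  ultimately have e: "?u - s = 1 / (?u + s)" using assms \<open>s < ?u\<close>
    by (simp add: field_simps)
  have "1 / (?u + s) \<le> 1 / (2 * s)"
    by (rule divide_left_mono) (use \<open>?u + s \<ge> 2 * s\<close> assms \<open>s < ?u\<close> in auto)
  thus "?u - s \<le> 1 / (2 * s)" using e by simp
qed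

lemma alpha_small: assumes "0 < s" "s \<le> A" "A > 0"
  shows "alpha A s = sqrt (s\<^sup>2 + 1) / s"
proof -
  have "(s - A) / A \<le> 0" using assms by (simp add: divide_nonpos_pos)
  thus ?thesis using chi_0 by (simp add: alpha_def gfun_def)
qed

lemma alpha_large: assumes "s \<ge> 2 * A" "A > 0"
  shows "alpha A s = 1"
proof -
  have "(s - A) / A \<ge> 1" using assms by (simp add: field_simps)
  thus ?thesis using chi_1 assms by (simp add: alpha_def gfun_def)
qed

lemma alpha1_large: assumes "s > 2 * A" "A > 0"
  shows "alpha1 A s = 0"
proof -
  have "((\<lambda>x. 1) has_real_derivative 0) (at s)" by simp
  then have "(alpha A has_real_derivative 0) (at s)"
    by (rule has_field_derivative_transform_within_open[where S="{2*A<..}"])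
       (use assms alpha_large in auto)
  moreover have "(alpha A has_real_derivative alpha1 A s) (at s)"
    using alpha1[OF assms(2)] assms by auto
  ultimately show ?thesis using DERIV_unique by blast
qed

lemma G1_small: assumes "0 < s" "s < A" "A > 0"
  shows "G1 A s = s / sqrt (s\<^sup>2 + 1)"
proof -
  have "(s - A) / A < 0" using assms by (simp add: divide_neg_pos)
  thus ?thesis using chi_0 chid_out by (simp add: G1_def)
qed

lemma G1_large: assumes "s > 2 * A" "A > 0"
  shows "G1 A s = 1"
proof -
  have "(s - A) / A > 1" using assms by (simp add: field_simps)
  thus ?thesis using chi_1 chid_out by (simp add: G1_def)
qed

lemma alpha_ge1: assumes "s > 0" "A > 0" shows "alpha A s \<ge> 1"
proof -
  have "gfun A s \<ge> s"
    unfolding gfun_def using chi_range[of "(s - A) / A"] u_facts(1)[OF assms(1)]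
    by (simp add: mult_nonneg_nonneg)
  thus ?thesis using assms by (simp add: alpha_def field_simps)
qed

lemma G1_pos: assumes "s > 0" shows "G1 Ac s > 0"
proof (cases "s < Ac")
  case True
  then show ?thesis using G1_small[OF assms True] Ac assms u_facts[OF assms] by simp
next
  case False
  let ?u = "sqrt (s\<^sup>2 + 1)" and ?t = "(s - Ac) / Ac"
  have s: "s \<ge> Ac" using False by simp
  have A2: "Ac \<ge> 2" using Ac by simp
  have d: "?u - s \<le> 1 / (2 * s)" "?u - s > 0" "?u \<ge> 1" using u_facts[OF assms] by auto
  have ds: "1 / (2 * s) \<le> 1 / 4" using s A2 by (simp add: field_simps)
  have c: "\<bar>chid ?t\<bar> \<le> Ac - 2" using Mchi(2)[of ?t] Ac by simp
  have t1: "\<bar>chid ?t / Ac * (?u - s)\<bar> \<le> 1 / 4"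
  proof -
    have "\<bar>chid ?t / Ac * (?u - s)\<bar> = \<bar>chid ?t\<bar> / Ac * (?u - s)"
      using d A2 by (simp add: abs_mult)
    also have "\<dots> \<le> 1 * (1/4)"
    proof (rule mult_mono)
      show "\<bar>chid ?t\<bar> / Ac \<le> 1" using c A2 by (simp add: field_simps)
    qed (use d ds in auto)
    finally show ?thesis by simp
  qed
  have t2: "(1 - chi ?t) * (1 - s / ?u) \<le> 1 / 4"
  proof -
    have "1 - s / ?u = (?u - s) / ?u" using d by (simp add: diff_divide_distrib)
    also have "\<dots> \<le> (?u - s) / 1" by (rule divide_left_mono) (use d in auto)
    also have "\<dots> = ?u - s" by simp
    finally have "1 - s / ?u \<le> 1/4" using d ds by linarith
    moreover have "1 - s / ?u \<ge> 0" using u_facts(1)[OF assms] sqrt1_pos[of s] divide_le_eq_1[of s ?u] by auto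
    ultimately have "(1 - chi ?t) * (1 - s / ?u) \<le> 1 * (1 - s / ?u)"
      using chi_range[of ?t] by (intro mult_right_mono) auto
    thus ?thesis using \<open>1 - s / ?u \<le> 1/4\<close> by (metis mult_1 order_trans)
  qed
  show ?thesis unfolding G1_def using t1 t2 abs_le_D1[OF t1] by linarith
qed

definition Dv :: "real \<Rightarrow> real" where "Dv s = alpha Ac s * G1 Ac s"

lemma Dv_pos: "s > 0 \<Longrightarrow> Dv s > 0"
  unfolding Dv_def using alpha_ge1[of s Ac] G1_pos[of s] Ac by (simp add: mult_pos_pos)

lemma Dv_small: "0 < s \<Longrightarrow> s < Ac \<Longrightarrow> Dv s = 1"
  unfolding Dv_def using alpha_small[of s Ac] G1_small[of s Ac] Ac u_facts[of s] by simp

lemma Dv_large: "s > 2 * Ac \<Longrightarrow> Dv s = 1"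
  unfolding Dv_def using alpha_large[of Ac s] G1_large[of Ac s] Ac by simp

lemma Dv_dip: "\<exists>x. Ac < x \<and> x < 2 * Ac \<and> Dv x < 1"
proof -
  have A: "Ac > 0" using Ac by simp
  let ?h = "\<lambda>s. (gfun Ac s)\<^sup>2 - s\<^sup>2"
  have der: "(?h has_real_derivative 2 * gfun Ac x * G1 Ac x - 2 * x) (at x)" for x
    using gfun_deriv[OF A] by (auto intro!: derivative_eq_intros)
  obtain z where z: "Ac < z" "z < 2 * Ac" "?h (2 * Ac) - ?h Ac = (2 * Ac - Ac) * (2 * gfun Ac z * G1 Ac z - 2 * z)"
    using MVT2[of Ac "2 * Ac" ?h, OF _ der] A by auto
  have "?h Ac = 1" using chi_0[of 0] zero_le_power2[of Ac] by (simp add: gfun_def)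
  moreover have "?h (2 * Ac) = 0" using chi_1[of 1] A by (simp add: gfun_def)
  ultimately have e: "Ac * (2 * gfun Ac z * G1 Ac z - 2 * z) = -1" using z by simp
  have "gfun Ac z * G1 Ac z < z"
  proof (rule ccontr)
    assume "\<not> ?thesis"
    then have "0 \<le> Ac * (2 * gfun Ac z * G1 Ac z - 2 * z)" using A by (intro mult_nonneg_nonneg) auto
    thus False using e by simp
  qed
  moreover have "Dv z = gfun Ac z * G1 Ac z / z" using z A by (simp add: Dv_def alpha_def)
  ultimately have "Dv z < 1" using z A by simp
  thus ?thesis using z by blast
qed

lemma Dv_cont: "s > 0 \<Longrightarrow> isCont Dv s"
proof -
  assume s: "s > 0"
  have A: "Ac > 0" using Ac by simp
  have "isCont (alpha Ac) s" using alpha1[OF A] s DERIV_isCont by blast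
  moreover have "isCont (G1 Ac) s"
    unfolding G1_def[abs_def]
    by (intro continuous_intros isCont_o2[OF _ chid_cont] isCont_o2[OF _ chi_cont]) (use A in auto)
  ultimately show ?thesis unfolding Dv_def[abs_def] by (intro continuous_intros)
qed

lemma Dv_min: "\<exists>s0. Ac \<le> s0 \<and> s0 \<le> 2 * Ac \<and> 0 < Dv s0 \<and> Dv s0 < 1 \<and> (\<forall>s>0. Dv s0 \<le> Dv s)"
proof -
  have A: "Ac > 0" using Ac by simp
  have "continuous_on {Ac/2..3*Ac} Dv"
    using A by (auto intro!: continuous_at_imp_continuous_on Dv_cont)
  then obtain s0 where s0: "s0 \<in> {Ac/2..3*Ac}" "\<forall>y\<in>{Ac/2..3*Ac}. Dv s0 \<le> Dv y"
    using continuous_attains_inf[of "{Ac/2..3*Ac}" Dv] A by auto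
  obtain x where x: "Ac < x" "x < 2 * Ac" "Dv x < 1" using Dv_dip by blast
  have "x \<in> {Ac/2..3*Ac}" using x A by auto
  hence "Dv s0 \<le> Dv x" using s0(2) by blast
  hence lt: "Dv s0 < 1" using x by linarith
  have pos: "Dv s0 > 0" using Dv_pos s0 A by auto
  have r: "Ac \<le> s0 \<and> s0 \<le> 2 * Ac"
  proof (rule ccontr)
    assume "\<not> ?thesis"
    then have "s0 < Ac \<or> s0 > 2 * Ac" by auto
    then have "Dv s0 = 1" using Dv_small Dv_large s0 A by force
    thus False using lt by simp
  qed
  have "\<forall>s>0. Dv s0 \<le> Dv s"
  proof (intro allI impI)
    fix s :: real assume "s > 0"
    show "Dv s0 \<le> Dv s"
    proof (cases "s \<in> {Ac/2..3*Ac}")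
      case True thus ?thesis using s0 by auto
    next
      case False
      then have "s < Ac \<or> s > 2 * Ac" using A by auto
      then have "Dv s = 1" using Dv_small Dv_large \<open>s>0\<close> by blast
      thus ?thesis using lt by simp
    qed
  qed
  thus ?thesis using r lt pos by blast
qed



type_synonym cv = "complex^2"

lemma fd_local:
  assumes "open S" "x \<in> S" "\<And>y. y \<in> S \<Longrightarrow> f y = g y"
  shows "frechet_derivative f (at x) = frechet_derivative g (at x)"
proof -
  have "(f has_derivative D) (at x) \<longleftrightarrow> (g has_derivative D) (at x)" for D
  proof
    assume "(f has_derivative D) (at x)"
    thus "(g has_derivative D) (at x)"
      by (rule has_derivative_transform_within_open) (use assms in auto)
  next
    assume "(g has_derivative D) (at x)"
    thus "(f has_derivative D) (at x)"
      by (rule has_derivative_transform_within_open) (use assms in auto)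
  qed
  thus ?thesis unfolding frechet_derivative_def by simp
qed

lemma wirt_local: "open S \<Longrightarrow> x \<in> S \<Longrightarrow> (\<And>y. y \<in> S \<Longrightarrow> f y = g y) \<Longrightarrow> wirt j f x = wirt j g x"
  unfolding wirt_def using fd_local[of S x f g] by simp
lemma wirtbar_local: "open S \<Longrightarrow> x \<in> S \<Longrightarrow> (\<And>y. y \<in> S \<Longrightarrow> f y = g y) \<Longrightarrow> wirtbar j f x = wirtbar j g x"
  unfolding wirtbar_def using fd_local[of S x f g] by simp

lemma wirt_D: "(f has_derivative D) (at x) \<Longrightarrow> wirt j f x = (D (axis j 1) - \<i> * D (axis j \<i>)) / 2"
  unfolding wirt_def using frechet_derivative_at[of f D x] by simp
lemma wirtbar_D: "(f has_derivative D) (at x) \<Longrightarrow> wirtbar j f x = (D (axis j 1) + \<i> * D (axis j \<i>)) / 2"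
  unfolding wirtbar_def using frechet_derivative_at[of f D x] by simp

lemma fd_D: "(f has_derivative D) (at x) \<Longrightarrow> frechet_derivative f (at x) = D"
  using frechet_derivative_at[of f D x] by simp

lemma wirt_add:
  fixes f g :: "cv \<Rightarrow> complex"
  assumes "f differentiable (at x)" "g differentiable (at x)"
  shows "wirt j (\<lambda>y. f y + g y) x = wirt j f x + wirt j g x"
    and "wirtbar j (\<lambda>y. f y + g y) x = wirtbar j f x + wirtbar j g x"
proof -
  obtain Df Dg where d: "(f has_derivative Df) (at x)" "(g has_derivative Dg) (at x)"
    using assms unfolding differentiable_def by blast
  have s: "((\<lambda>y. f y + g y) has_derivative (\<lambda>h. Df h + Dg h)) (at x)" by (intro has_derivative_add d)
  show "wirt j (\<lambda>y. f y + g y) x = wirt j f x + wirt j g x"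
    unfolding wirt_D[OF s, of j] wirt_D[OF d(1), of j] wirt_D[OF d(2), of j] by (simp add: algebra_simps add_divide_distrib diff_divide_distrib)
  show "wirtbar j (\<lambda>y. f y + g y) x = wirtbar j f x + wirtbar j g x"
    using wirtbar_D[OF s] wirtbar_D[OF d(1)] wirtbar_D[OF d(2)] by (simp add: algebra_simps add_divide_distrib diff_divide_distrib)
qed

lemma wirt_mult:
  fixes f g :: "cv \<Rightarrow> complex"
  assumes "f differentiable (at x)" "g differentiable (at x)"
  shows "wirt j (\<lambda>y. f y * g y) x = wirt j f x * g x + f x * wirt j g x"
    and "wirtbar j (\<lambda>y. f y * g y) x = wirtbar j f x * g x + f x * wirtbar j g x"
proof -
  obtain Df Dg where d: "(f has_derivative Df) (at x)" "(g has_derivative Dg) (at x)"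
    using assms unfolding differentiable_def by blast
  have s: "((\<lambda>y. f y * g y) has_derivative (\<lambda>h. f x * Dg h + Df h * g x)) (at x)"
    by (intro has_derivative_mult d)
  show "wirt j (\<lambda>y. f y * g y) x = wirt j f x * g x + f x * wirt j g x"
    unfolding wirt_D[OF s, of j] wirt_D[OF d(1), of j] wirt_D[OF d(2), of j] by (simp add: algebra_simps add_divide_distrib diff_divide_distrib)
  show "wirtbar j (\<lambda>y. f y * g y) x = wirtbar j f x * g x + f x * wirtbar j g x"
    using wirtbar_D[OF s] wirtbar_D[OF d(1)] wirtbar_D[OF d(2)] by (simp add: algebra_simps add_divide_distrib diff_divide_distrib)
qed

lemma wirt_const: "wirt j (\<lambda>y::cv. c) x = 0" "wirtbar j (\<lambda>y::cv. c) x = 0"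
  using wirt_D[OF has_derivative_const] wirtbar_D[OF has_derivative_const] by auto

lemma d_nth: "((\<lambda>y::cv. y $ k) has_derivative (\<lambda>h. h $ k)) (at x)"
  using bounded_linear_vec_nth bounded_linear_imp_has_derivative by blast

lemma d_cnj_nth: "((\<lambda>y::cv. cnj (y $ k)) has_derivative (\<lambda>h. cnj (h $ k))) (at x)"
proof -
  have "bounded_linear (\<lambda>y::cv. cnj (y $ k))"
    using bounded_linear_compose[OF bounded_linear_cnj bounded_linear_vec_nth[of k]] by (simp add: o_def)
  thus ?thesis using bounded_linear_imp_has_derivative by blast
qed

lemma axis_nth': "axis j c $ k = (if k = j then c else 0)"
  unfolding axis_def by simp

lemma wirt_nth: "wirt j (\<lambda>y::cv. y $ k) x = (if k = j then 1 else 0)"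
                "wirtbar j (\<lambda>y::cv. y $ k) x = 0"
  using wirt_D[OF d_nth[of k x], of j] wirtbar_D[OF d_nth[of k x], of j] by (cases "k = j"; simp add: axis_nth')+

lemma wirt_cnj_nth: "wirt j (\<lambda>y::cv. cnj (y $ k)) x = 0"
                "wirtbar j (\<lambda>y::cv. cnj (y $ k)) x = (if k = j then 1 else 0)"
  using wirt_D[OF d_cnj_nth[of k x], of j] wirtbar_D[OF d_cnj_nth[of k x], of j] by (cases "k = j"; simp add: axis_nth')+

lemma d_nsq: "((\<lambda>y::cv. (norm y)\<^sup>2) has_derivative (\<lambda>h. 2 * (x \<bullet> h))) (at x)"
proof -
  have "((\<lambda>y::cv. y \<bullet> y) has_derivative (\<lambda>h. x \<bullet> h + h \<bullet> x)) (at x)"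
    by (intro has_derivative_inner has_derivative_ident)
  thus ?thesis unfolding power2_norm_eq_inner by (simp add: inner_commute)
qed

lemma d_radial:
  assumes "(a has_real_derivative a') (at ((norm x)\<^sup>2))"
  shows "((\<lambda>y::cv. complex_of_real (a ((norm y)\<^sup>2))) has_derivative
           (\<lambda>h. complex_of_real (2 * (x \<bullet> h) * a'))) (at x)"
proof -
  have "((\<lambda>y::cv. a ((norm y)\<^sup>2)) has_derivative (\<lambda>h. 2 * (x \<bullet> h) * a')) (at x)"
    by (rule DERIV_compose_FDERIV[OF assms d_nsq])
  from bounded_linear.has_derivative[OF bounded_linear_of_real this]
  show ?thesis by simp
qed

lemma inner_axis_c: "(x::cv) \<bullet> axis j 1 = Re (x $ j)" "(x::cv) \<bullet> axis j \<i> = Im (x $ j)"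
  by (simp_all add: inner_axis)

lemma wirt_radial:
  assumes "(a has_real_derivative a') (at ((norm x)\<^sup>2))"
  shows "wirt j (\<lambda>y::cv. complex_of_real (a ((norm y)\<^sup>2))) x = complex_of_real a' * cnj (x $ j)"
    and "wirtbar j (\<lambda>y::cv. complex_of_real (a ((norm y)\<^sup>2))) x = complex_of_real a' * x $ j"
  using wirt_D[OF d_radial[OF assms]] wirtbar_D[OF d_radial[OF assms]]
  by (simp_all add: inner_axis_c complex_eq_iff)

lemma diff_radial:
  assumes "(a has_real_derivative a') (at ((norm x)\<^sup>2))"
  shows "(\<lambda>y::cv. complex_of_real (a ((norm y)\<^sup>2))) differentiable (at x)"
  using d_radial[OF assms] unfolding differentiable_def by blast

lemma diff_nth: "(\<lambda>y::cv. y $ k) differentiable (at x)" "(\<lambda>y::cv. cnj (y $ k)) differentiable (at x)"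
  using d_nth d_cnj_nth unfolding differentiable_def by blast+



lemma class_smooth:
  fixes F :: "('a::real_normed_vector \<Rightarrow> 'b::real_normed_vector) set"
  assumes S: "open S"
    and diff: "\<And>f x. f \<in> F \<Longrightarrow> x \<in> S \<Longrightarrow> f differentiable (at x)"
    and der: "\<And>f v. f \<in> F \<Longrightarrow> \<exists>g\<in>F. \<forall>x\<in>S. frechet_derivative f (at x) v = g x"
    and f: "f \<in> F"
  shows "smooth_on S f"
proof -
  have key: "\<forall>f\<in>F. \<exists>g\<in>F. \<forall>x\<in>S. iter_dd f vs x = g x" for vs
  proof (induction vs)
    case Nil thus ?case by auto
  next
    case (Cons v vs)
    show ?case
    proof
      fix f assume "f \<in> F"
      then obtain g where g: "g \<in> F" "\<forall>x\<in>S. iter_dd f vs x = g x" using Cons by blast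
      obtain g' where g': "g' \<in> F" "\<forall>x\<in>S. frechet_derivative g (at x) v = g' x" using der[OF g(1)] by blast
      have "\<forall>x\<in>S. iter_dd f (v # vs) x = g' x"
      proof
        fix x assume x: "x \<in> S"
        have "iter_dd f (v # vs) x = frechet_derivative (iter_dd f vs) (at x) v" by simp
        also have "\<dots> = frechet_derivative g (at x) v"
          using fd_local[OF S x, of "iter_dd f vs" g] g(2) by simp
        also have "\<dots> = g' x" using g' x by simp
        finally show "iter_dd f (v # vs) x = g' x" .
      qed
      thus "\<exists>g\<in>F. \<forall>x\<in>S. iter_dd f (v # vs) x = g x" using g' by blast
    qed
  qed
  show ?thesis unfolding smooth_on_def
  proof (intro conjI allI ballI S)
    fix vs x assume x: "x \<in> S"
    obtain g where g: "g \<in> F" "\<forall>x\<in>S. iter_dd f vs x = g x" using key f by blast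
    obtain D where D: "(g has_derivative D) (at x)" using diff[OF g(1) x] unfolding differentiable_def by blast
    have "(iter_dd f vs has_derivative D) (at x)"
      by (rule has_derivative_transform_within_open[OF D S x]) (use g in auto)
    thus "iter_dd f vs differentiable (at x)" unfolding differentiable_def by blast
  qed
qed

inductive_set Poly :: "(cv \<Rightarrow> complex) set" where
  P_const: "(\<lambda>w. c) \<in> Poly"
| P_lin: "bounded_linear L \<Longrightarrow> L \<in> Poly"
| P_add: "P \<in> Poly \<Longrightarrow> Q \<in> Poly \<Longrightarrow> (\<lambda>w. P w + Q w) \<in> Poly"
| P_mult: "P \<in> Poly \<Longrightarrow> Q \<in> Poly \<Longrightarrow> (\<lambda>w. P w * Q w) \<in> Poly"

lemma Poly_deriv: "P \<in> Poly \<Longrightarrow> \<exists>D. (\<forall>x. (P has_derivative D x) (at x)) \<and> (\<forall>v. (\<lambda>x. D x v) \<in> Poly)"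
proof (induction rule: Poly.induct)
  case (P_const c)
  show ?case by (rule exI[of _ "\<lambda>x h. 0"]) (auto intro: Poly.P_const)
next
  case (P_lin L)
  show ?case
    by (rule exI[of _ "\<lambda>x. L"]) (auto intro: Poly.P_const bounded_linear_imp_has_derivative P_lin)
next
  case (P_add P Q)
  then obtain D1 D2 where "\<forall>x. (P has_derivative D1 x) (at x)" "\<forall>v. (\<lambda>x. D1 x v) \<in> Poly"
    "\<forall>x. (Q has_derivative D2 x) (at x)" "\<forall>v. (\<lambda>x. D2 x v) \<in> Poly" by blast
  thus ?case
    by (intro exI[of _ "\<lambda>x h. D1 x h + D2 x h"]) (auto intro: Poly.P_add has_derivative_add)
next
  case (P_mult P Q)
  then obtain D1 D2 where "\<forall>x. (P has_derivative D1 x) (at x)" "\<forall>v. (\<lambda>x. D1 x v) \<in> Poly"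
    "\<forall>x. (Q has_derivative D2 x) (at x)" "\<forall>v. (\<lambda>x. D2 x v) \<in> Poly" by blast
  thus ?case using P_mult.hyps
    by (intro exI[of _ "\<lambda>x h. P x * D2 x h + D1 x h * Q x"])
       (auto intro!: Poly.P_add Poly.P_mult has_derivative_mult)
qed

inductive_set Fc :: "real \<Rightarrow> (real \<Rightarrow> real) set \<Rightarrow> (cv \<Rightarrow> complex) set" for c K where
  F_term: "P \<in> Poly \<Longrightarrow> k \<in> K \<Longrightarrow> (\<lambda>w. P w * complex_of_real (k ((norm w)\<^sup>2 / c))) \<in> Fc c K"
| F_add: "f \<in> Fc c K \<Longrightarrow> g \<in> Fc c K \<Longrightarrow> (\<lambda>w. f w + g w) \<in> Fc c K"

lemma lin_inner: "bounded_linear (\<lambda>w::cv. complex_of_real (w \<bullet> v))"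
  using bounded_linear_compose[OF bounded_linear_of_real bounded_linear_inner_left[of v]]
  by (simp add: o_def)

lemma Fc_deriv:
  assumes c: "c > 0" and K: "dclosed {0<..} K" and f: "f \<in> Fc c K"
  shows "\<exists>D. (\<forall>x. x \<noteq> 0 \<longrightarrow> (f has_derivative D x) (at x)) \<and>
             (\<forall>v. \<exists>g\<in>Fc c K. \<forall>x. x \<noteq> 0 \<longrightarrow> D x v = g x)"
  using f
proof induction
  case (F_term P k)
  obtain DP where DP: "\<forall>x. (P has_derivative DP x) (at x)" "\<forall>v. (\<lambda>x. DP x v) \<in> Poly"
    using Poly_deriv[OF F_term(1)] by blast
  obtain k' where k': "k' \<in> K" "\<forall>s\<in>{0<..}. (k has_real_derivative k' s) (at s)"
    using K F_term(2) unfolding dclosed_def by blast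
  let ?D = "\<lambda>x h. P x * complex_of_real (2 * (x \<bullet> h) * (k' ((norm x)\<^sup>2 / c) / c))
                  + DP x h * complex_of_real (k ((norm x)\<^sup>2 / c))"
  have A1: "((\<lambda>w. P w * complex_of_real (k ((norm w)\<^sup>2 / c))) has_derivative ?D x) (at x)" if "x \<noteq> 0" for x
  proof -
    have pos: "(norm x)\<^sup>2 / c > 0" using that c by simp
    have "((\<lambda>s. k (s / c)) has_real_derivative k' ((norm x)\<^sup>2 / c) * (1 / c)) (at ((norm x)\<^sup>2))"
      by (rule DERIV_chain2[of k]) (use k' pos in \<open>auto intro!: derivative_eq_intros\<close>)
    hence "((\<lambda>s. k (s / c)) has_real_derivative k' ((norm x)\<^sup>2 / c) / c) (at ((norm x)\<^sup>2))" by simp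
    from d_radial[OF this] have r: "((\<lambda>y. complex_of_real (k ((norm y)\<^sup>2 / c))) has_derivative
        (\<lambda>h. complex_of_real (2 * (x \<bullet> h) * (k' ((norm x)\<^sup>2 / c) / c)))) (at x)" by simp
    show ?thesis using has_derivative_mult[OF DP(1)[rule_format, of x] r] by simp
  qed
  have A2: "\<exists>g\<in>Fc c K. \<forall>x. x \<noteq> 0 \<longrightarrow> ?D x v = g x" for v
  proof -
    let ?Q = "\<lambda>w. P w * ((\<lambda>w. complex_of_real (2 / c)) w * (\<lambda>w. complex_of_real (w \<bullet> v)) w)"
    have Q: "?Q \<in> Poly" by (intro P_mult P_const P_lin lin_inner F_term(1))
    let ?g = "\<lambda>w. (\<lambda>w. ?Q w * complex_of_real (k' ((norm w)\<^sup>2 / c))) w +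
                   (\<lambda>w. DP w v * complex_of_real (k ((norm w)\<^sup>2 / c))) w"
    have g: "?g \<in> Fc c K" by (intro Fc.F_add Fc.F_term Q DP(2)[rule_format] k'(1) F_term(2))
    have h: "\<forall>x. x \<noteq> 0 \<longrightarrow> ?D x v = ?g x" by (simp add: algebra_simps)
    show ?thesis
      apply (rule bexI[of _ ?g])
       apply (fact h)
      apply (fact g)
      done
  qed
  show ?case
    apply (rule exI[of _ ?D])
    using A1 A2 by blast
next
  case (F_add f g)
  then obtain D1 D2 where d: "\<forall>x. x \<noteq> 0 \<longrightarrow> (f has_derivative D1 x) (at x)"
      "\<forall>v. \<exists>g\<in>Fc c K. \<forall>x. x \<noteq> 0 \<longrightarrow> D1 x v = g x"
      "\<forall>x. x \<noteq> 0 \<longrightarrow> (g has_derivative D2 x) (at x)"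
      "\<forall>v. \<exists>g\<in>Fc c K. \<forall>x. x \<noteq> 0 \<longrightarrow> D2 x v = g x" by blast
  have "\<exists>h\<in>Fc c K. \<forall>x. x \<noteq> 0 \<longrightarrow> D1 x v + D2 x v = h x" for v
  proof -
    obtain g1 g2 where "g1 \<in> Fc c K" "\<forall>x. x \<noteq> 0 \<longrightarrow> D1 x v = g1 x"
      "g2 \<in> Fc c K" "\<forall>x. x \<noteq> 0 \<longrightarrow> D2 x v = g2 x" using d(2,4) by meson
    thus ?thesis
      apply (intro bexI[of _ "\<lambda>x. g1 x + g2 x"])
       apply simp
      by (rule Fc.F_add)
  qed
  moreover have "\<forall>x. x \<noteq> 0 \<longrightarrow> ((\<lambda>w. f w + g w) has_derivative (\<lambda>h. D1 x h + D2 x h)) (at x)"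
    using d(1,3) by (auto intro: has_derivative_add)
  ultimately show ?case
    apply (intro exI[of _ "\<lambda>x h. D1 x h + D2 x h"])
    by blast
qed

lemma Fc_smooth:
  assumes c: "c > 0" and K: "dclosed {0<..} K" and f: "f \<in> Fc c K"
  shows "smooth_on (- {0}) f"
proof (rule class_smooth[OF _ _ _ f])
  show "open (- {0::cv})" by auto
  fix g x assume g: "g \<in> Fc c K" and x: "x \<in> - {0::cv}"
  then obtain D where "(g has_derivative D x) (at x)" using Fc_deriv[OF c K g] by auto
  thus "g differentiable (at x)" unfolding differentiable_def by blast
next
  fix g v assume g: "g \<in> Fc c K"
  obtain D where D: "\<forall>x. x \<noteq> 0 \<longrightarrow> (g has_derivative D x) (at x)"
     "\<forall>v. \<exists>g\<in>Fc c K. \<forall>x. x \<noteq> 0 \<longrightarrow> D x v = g x" using Fc_deriv[OF c K g] by blast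
  obtain h where h: "h \<in> Fc c K" "\<forall>x. x \<noteq> 0 \<longrightarrow> D x v = h x" using D(2) by blast
  have "\<forall>x\<in>- {0}. frechet_derivative g (at x) v = h x"
    using D(1) h(2) fd_D by fastforce
  thus "\<exists>h\<in>Fc c K. \<forall>x\<in>- {0}. frechet_derivative g (at x) v = h x" using h(1) by blast
qed



lemma wirt_Hent:
  fixes x :: cv
  assumes da: "(a has_real_derivative a1) (at ((norm x)\<^sup>2))"
      and db: "(b has_real_derivative b1) (at ((norm x)\<^sup>2))"
  shows "wirt l (\<lambda>y. complex_of_real (a ((norm y)\<^sup>2)) * c + cnj (y $ j) * y $ k * complex_of_real (b ((norm y)\<^sup>2))) x
       = complex_of_real a1 * cnj (x $ l) * c + cnj (x $ j) * (if k = l then 1 else 0) * complex_of_real (b ((norm x)\<^sup>2))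
         + cnj (x $ j) * x $ k * (complex_of_real b1 * cnj (x $ l))"
    and "wirtbar l (\<lambda>y. complex_of_real (a ((norm y)\<^sup>2)) * c + cnj (y $ j) * y $ k * complex_of_real (b ((norm y)\<^sup>2))) x
       = complex_of_real a1 * x $ l * c + (if j = l then 1 else 0) * x $ k * complex_of_real (b ((norm x)\<^sup>2))
         + cnj (x $ j) * x $ k * (complex_of_real b1 * x $ l)"
proof -
  let ?A = "\<lambda>y::cv. complex_of_real (a ((norm y)\<^sup>2))"
  let ?B = "\<lambda>y::cv. complex_of_real (b ((norm y)\<^sup>2))"
  let ?C = "\<lambda>y::cv. cnj (y $ j)" and ?N = "\<lambda>y::cv. y $ k"
  have dA: "?A differentiable (at x)" by (rule diff_radial[OF da])
  have dB: "?B differentiable (at x)" by (rule diff_radial[OF db])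
  have dC: "?C differentiable (at x)" and dN: "?N differentiable (at x)" using diff_nth by auto
  have dCN: "(\<lambda>y. ?C y * ?N y) differentiable (at x)" using dC dN by simp
  have dAc: "(\<lambda>y. ?A y * c) differentiable (at x)" using dA by simp
  have dCNB: "(\<lambda>y. ?C y * ?N y * ?B y) differentiable (at x)" using dCN dB by simp
  show "wirt l (\<lambda>y. ?A y * c + ?C y * ?N y * ?B y) x = complex_of_real a1 * cnj (x $ l) * c + cnj (x $ j) * (if k = l then 1 else 0) * complex_of_real (b ((norm x)\<^sup>2))
         + cnj (x $ j) * x $ k * (complex_of_real b1 * cnj (x $ l))"
    unfolding wirt_add(1)[OF dAc dCNB] wirt_mult(1)[OF dA differentiable_const] wirt_mult(1)[OF dCN dB]
       wirt_mult(1)[OF dC dN] wirt_radial(1)[OF da] wirt_radial(1)[OF db] wirt_const wirt_nth wirt_cnj_nth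
    by simp
  show "wirtbar l (\<lambda>y. ?A y * c + ?C y * ?N y * ?B y) x = complex_of_real a1 * x $ l * c + (if j = l then 1 else 0) * x $ k * complex_of_real (b ((norm x)\<^sup>2))
         + cnj (x $ j) * x $ k * (complex_of_real b1 * x $ l)"
    unfolding wirt_add(2)[OF dAc dCNB] wirt_mult(2)[OF dA differentiable_const] wirt_mult(2)[OF dCN dB]
       wirt_mult(2)[OF dC dN] wirt_radial(2)[OF da] wirt_radial(2)[OF db] wirt_const wirt_nth wirt_cnj_nth
    by simp
qed

definition bt :: "real \<Rightarrow> real \<Rightarrow> real" where "bt t s = alpha Ac (s / t\<^sup>2)"
definition b1 :: "real \<Rightarrow> real \<Rightarrow> real" where "b1 t s = alpha1 Ac (s / t\<^sup>2) / t\<^sup>2"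
definition b2 :: "real \<Rightarrow> real \<Rightarrow> real" where "b2 t s = alpha2 Ac (s / t\<^sup>2) / t\<^sup>2 / t\<^sup>2"

lemma Ac_pos: "Ac > 0" using Ac by simp

lemma bt_deriv: assumes "t > 0" "s > 0"
  shows "(bt t has_real_derivative b1 t s) (at s)" "(b1 t has_real_derivative b2 t s) (at s)"
proof -
  have p: "s / t\<^sup>2 > 0" using assms by simp
  have "((\<lambda>s. alpha Ac (s / t\<^sup>2)) has_real_derivative alpha1 Ac (s / t\<^sup>2) * (1 / t\<^sup>2)) (at s)"
    by (rule DERIV_chain2[of "alpha Ac"]) (use alpha1[OF Ac_pos] p assms in \<open>auto intro!: derivative_eq_intros simp: field_simps eval_nat_numeral\<close>)
  thus "(bt t has_real_derivative b1 t s) (at s)" unfolding bt_def[abs_def] b1_def by simp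
  have "((\<lambda>s. alpha1 Ac (s / t\<^sup>2)) has_real_derivative alpha2 Ac (s / t\<^sup>2) * (1 / t\<^sup>2)) (at s)"
    by (rule DERIV_chain2[of "alpha1 Ac"]) (use alpha2[OF Ac_pos] p assms in \<open>auto intro!: derivative_eq_intros simp: field_simps eval_nat_numeral\<close>)
  from DERIV_cmult[OF this, of "1 / t\<^sup>2"]
  show "(b1 t has_real_derivative b2 t s) (at s)" unfolding b1_def[abs_def] b2_def by (simp add: field_simps)
qed

definition Hm :: "real \<Rightarrow> cv \<Rightarrow> complex^2^2" where
  "Hm t w = (\<chi> j k. complex_of_real (bt t ((norm w)\<^sup>2)) * (if j = k then 1 else 0)
                 + cnj (w $ j) * w $ k * complex_of_real (b1 t ((norm w)\<^sup>2)))"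

lemma Hm_nth: "Hm t w $ j $ k = complex_of_real (bt t ((norm w)\<^sup>2)) * (if j = k then 1 else 0)
                 + cnj (w $ j) * w $ k * complex_of_real (b1 t ((norm w)\<^sup>2))"
  unfolding Hm_def by simp

lemma Hm_closed: assumes "t > 0" shows "closed_form11_on (- {0}) (Hm t)"
  unfolding closed_form11_on_def
proof (rule conjI; intro allI ballI)
  fix j k
  let ?f = "\<lambda>w::cv. (\<lambda>w. complex_of_real (if j = k then 1 else 0)) w * complex_of_real (alpha Ac ((norm w)\<^sup>2 / t\<^sup>2))
       + (\<lambda>w. cnj (w $ j) * w $ k * complex_of_real (1 / t\<^sup>2)) w * complex_of_real (alpha1 Ac ((norm w)\<^sup>2 / t\<^sup>2))"
  have bl: "bounded_linear (\<lambda>w::cv. cnj (w $ j))"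
    by (rule bounded_linear_compose[OF bounded_linear_cnj bounded_linear_vec_nth[of j], unfolded o_def])
  have P1: "(\<lambda>w::cv. cnj (w $ j) * w $ k * complex_of_real (1 / t\<^sup>2)) \<in> Poly"
    by (intro P_mult P_const P_lin bl bounded_linear_vec_nth)
  have "?f \<in> Fc (t\<^sup>2) (alg (Gal Ac))"
    by (intro F_add F_term P1 P_const alpha_alg conjunct1[OF alpha1[OF Ac_pos]])
  from Fc_smooth[OF _ dclosed_Gal[OF Ac_pos] this] assms
  have "smooth_on (- {0}) ?f" by simp
  moreover have "?f = (\<lambda>x. Hm t x $ j $ k)"
    by (auto simp: Hm_nth bt_def b1_def)
  ultimately show "smooth_on (- {0}) (\<lambda>x. Hm t x $ j $ k)" by simp
next
  fix x :: cv and j k l assume x: "x \<in> - {0}"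
  have s: "(norm x)\<^sup>2 > 0" using x by simp
  note d = bt_deriv[OF assms s]
  have e: "\<And>j k. (\<lambda>y. Hm t y $ j $ k) = (\<lambda>y. complex_of_real (bt t ((norm y)\<^sup>2)) * (if j = k then 1 else 0)
                 + cnj (y $ j) * y $ k * complex_of_real (b1 t ((norm y)\<^sup>2)))"
    by (simp add: Hm_nth)
  show "wirt l (\<lambda>y. Hm t y $ j $ k) x = wirt j (\<lambda>y. Hm t y $ l $ k) x \<and>
        wirtbar l (\<lambda>y. Hm t y $ j $ k) x = wirtbar k (\<lambda>y. Hm t y $ j $ l) x"
    unfolding e wirt_Hent[OF d] by (auto simp: algebra_simps)
qed



lemma nsq2: "(norm (w::cv))\<^sup>2 = (cmod (w $ 1))\<^sup>2 + (cmod (w $ 2))\<^sup>2"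
  unfolding norm_vec_def L2_set_def sum_2 by simp

lemma cnj_self: "cnj z * z = complex_of_real ((cmod z)\<^sup>2)"
  using complex_norm_square[of z] by (simp add: mult.commute)

definition psi :: "real \<Rightarrow> real \<Rightarrow> real" where
  "psi t s = sqrt (s\<^sup>2 + t ^ 4) + t\<^sup>2 * ln (s / (sqrt (s\<^sup>2 + t ^ 4) + t\<^sup>2))"

lemma psi_deriv: assumes t: "t > 0" and s: "s > 0"
  shows "(psi t has_real_derivative sqrt (s\<^sup>2 + t ^ 4) / s) (at s)"
proof -
  define u where "u = sqrt (s\<^sup>2 + t ^ 4)"
  have p: "s\<^sup>2 + t ^ 4 > 0" using t by (simp add: add_nonneg_pos)
  have upos: "u > 0" unfolding u_def using p by simp
  have u2: "u\<^sup>2 = s\<^sup>2 + t ^ 4" unfolding u_def using p by simp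
  have du: "((\<lambda>s. sqrt (s\<^sup>2 + t ^ 4)) has_real_derivative inverse (sqrt (s\<^sup>2 + t ^ 4)) / 2 * (2 * s)) (at s)"
    by (rule DERIV_chain2[where g="\<lambda>s. s\<^sup>2 + t ^ 4", OF DERIV_real_sqrt[OF p]]) (auto intro!: derivative_eq_intros)
  hence du': "((\<lambda>s. sqrt (s\<^sup>2 + t ^ 4)) has_real_derivative s / u) (at s)"
    unfolding u_def by (simp add: field_simps)
  have ne: "sqrt (s\<^sup>2 + t ^ 4) + t\<^sup>2 \<noteq> 0" using upos t unfolding u_def by (smt (verit) zero_le_power2)
  have dq: "((\<lambda>s. s / (sqrt (s\<^sup>2 + t ^ 4) + t\<^sup>2)) has_real_derivative
           (1 * (u + t\<^sup>2) - s * (s / u + 0)) / ((u + t\<^sup>2) * (u + t\<^sup>2))) (at s)"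
    using DERIV_divide[OF DERIV_ident DERIV_add[OF du' DERIV_const] ne] unfolding u_def by simp
  have ut0: "u + t\<^sup>2 > 0" using upos t by (smt (verit) zero_le_power2)
  have qpos: "s / (u + t\<^sup>2) > 0" using s ut0 by simp
  have dl: "((\<lambda>s. ln (s / (sqrt (s\<^sup>2 + t ^ 4) + t\<^sup>2))) has_real_derivative
           inverse (s / (u + t\<^sup>2)) * ((1 * (u + t\<^sup>2) - s * (s / u + 0)) / ((u + t\<^sup>2) * (u + t\<^sup>2)))) (at s)"
    using DERIV_chain2[where g="\<lambda>s. s / (sqrt (s\<^sup>2 + t ^ 4) + t\<^sup>2)", OF DERIV_ln[OF qpos[unfolded u_def]] dq]
    unfolding u_def by simp
  have all: "(psi t has_real_derivative s / u + t\<^sup>2 * (inverse (s / (u + t\<^sup>2)) * ((1 * (u + t\<^sup>2) - s * (s / u + 0)) / ((u + t\<^sup>2) * (u + t\<^sup>2))))) (at s)"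
    unfolding psi_def[abs_def] by (intro DERIV_add du' DERIV_cmult dl)
  have "s / u + t\<^sup>2 * (inverse (s / (u + t\<^sup>2)) * ((1 * (u + t\<^sup>2) - s * (s / u + 0)) / ((u + t\<^sup>2) * (u + t\<^sup>2))))
       = u / s"
  proof -
    have ut: "u + t\<^sup>2 > 0" by (rule ut0)
    have X: "1 * (u + t\<^sup>2) - s * (s / u + 0) = t\<^sup>2 * (u + t\<^sup>2) / u"
    proof -
      have "u * (u + t\<^sup>2) - s\<^sup>2 = t\<^sup>2 * (u + t\<^sup>2)" using u2 by (simp add: algebra_simps power2_eq_square eval_nat_numeral)
      thus ?thesis using upos by (simp add: field_simps power2_eq_square)
    qed
    have "s / u + t\<^sup>2 * (inverse (s / (u + t\<^sup>2)) * ((1 * (u + t\<^sup>2) - s * (s / u + 0)) / ((u + t\<^sup>2) * (u + t\<^sup>2))))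
        = s / u + t\<^sup>2 * ((u + t\<^sup>2) / s * (t\<^sup>2 * (u + t\<^sup>2) / u / ((u + t\<^sup>2) * (u + t\<^sup>2))))"
      unfolding X by (simp add: inverse_eq_divide)
    also have "(u + t\<^sup>2) / s * (t\<^sup>2 * (u + t\<^sup>2) / u / ((u + t\<^sup>2) * (u + t\<^sup>2))) = t\<^sup>2 / (u * s)"
    proof -
      have "\<And>w. w \<noteq> 0 \<Longrightarrow> w / s * (t\<^sup>2 * w / u / (w * w)) = t\<^sup>2 / (u * s)"
        using upos s by (simp add: field_simps)
      thus ?thesis using ut by simp
    qed
    also have "s / u + t\<^sup>2 * (t\<^sup>2 / (u * s)) = (s\<^sup>2 + t ^ 4) / (u * s)"
      using upos s by (simp add: field_simps power2_eq_square eval_nat_numeral)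
    also have "\<dots> = u / s" using u2[symmetric] upos s by (simp add: field_simps power2_eq_square)
    finally show ?thesis .
  qed
  thus ?thesis using all unfolding u_def by simp
qed


lemma EHpot_psi: "EH_potential t y = psi t ((norm y)\<^sup>2)"
  unfolding EH_potential_def psi_def by (simp add: power_mult[symmetric])

lemma bt_eq: assumes t: "t > 0" and s: "0 < s" "s < Ac * t\<^sup>2"
  shows "bt t s = sqrt (s\<^sup>2 + t ^ 4) / s"
proof -
  have t2: "t\<^sup>2 > 0" using t by simp
  have "s / t\<^sup>2 \<le> Ac" using s t2 by (simp add: field_simps)
  hence "bt t s = sqrt ((s / t\<^sup>2)\<^sup>2 + 1) / (s / t\<^sup>2)"
    unfolding bt_def using alpha_small[of "s / t\<^sup>2" Ac] s t2 Ac_pos by simp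
  also have "(s / t\<^sup>2)\<^sup>2 + 1 = (s\<^sup>2 + t ^ 4) / (t\<^sup>2)\<^sup>2"
  proof -
    have "(t\<^sup>2)\<^sup>2 = t ^ 4" by (simp add: power_mult[symmetric])
    moreover have "t ^ 4 > 0" using t by simp
    ultimately show ?thesis by (simp add: power_divide add_divide_distrib)
  qed
  also have "sqrt \<dots> = sqrt (s\<^sup>2 + t ^ 4) / t\<^sup>2"
  proof -
    have e: "t ^ 4 = (t\<^sup>2)\<^sup>2" by (simp add: power_mult[symmetric])
    have "sqrt (t ^ 4) = t\<^sup>2" by (simp only: e real_sqrt_abs abs_of_nonneg zero_le_power2)
    thus ?thesis by (simp add: real_sqrt_divide)
  qed
  finally show ?thesis using t2 s by (simp add: field_simps)
qed

lemma EH_eq: assumes t: "t > 0" and w: "w \<noteq> 0" "(norm w)\<^sup>2 < Ac * t\<^sup>2"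
  shows "EH_form t w = Hm t w"
proof -
  define S where "S = ball (0::cv) (t * sqrt Ac) - {0}"
  have So: "open S" unfolding S_def by auto
  have inS: "y \<in> S \<longleftrightarrow> y \<noteq> 0 \<and> (norm y)\<^sup>2 < Ac * t\<^sup>2" for y
  proof -
    have c0: "0 \<le> t * sqrt Ac" using t Ac_pos by simp
    have "norm y < t * sqrt Ac \<longleftrightarrow> (norm y)\<^sup>2 < (t * sqrt Ac)\<^sup>2"
      using power_strict_mono[of "norm y" "t * sqrt Ac" 2] power2_less_imp_less[OF _ c0, of "norm y"] by auto
    also have "(t * sqrt Ac)\<^sup>2 = Ac * t\<^sup>2" using Ac_pos by (simp add: power_mult_distrib)
    finally show ?thesis unfolding S_def by auto
  qed
  have wS: "w \<in> S" using inS w by simp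
  have wb: "wirtbar k (\<lambda>y. complex_of_real (EH_potential t y)) y = complex_of_real (bt t ((norm y)\<^sup>2)) * y $ k"
    if "y \<in> S" for y k
  proof -
    have y: "y \<noteq> 0" "(norm y)\<^sup>2 < Ac * t\<^sup>2" using that inS by auto
    have "wirtbar k (\<lambda>y. complex_of_real (EH_potential t y)) y
        = wirtbar k (\<lambda>y. complex_of_real (psi t ((norm y)\<^sup>2))) y" by (simp add: EHpot_psi)
    also have "\<dots> = complex_of_real (sqrt (((norm y)\<^sup>2)\<^sup>2 + t ^ 4) / (norm y)\<^sup>2) * y $ k"
      by (rule wirt_radial(2)[OF psi_deriv[OF t]]) (use y in simp)
    also have "\<dots> = complex_of_real (bt t ((norm y)\<^sup>2)) * y $ k"
      using bt_eq[OF t, of "(norm y)\<^sup>2"] y by simp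
    finally show ?thesis .
  qed
  have "EH_form t w $ j $ k = Hm t w $ j $ k" for j k
  proof -
    have s: "(norm w)\<^sup>2 > 0" using w by simp
    note d = bt_deriv(1)[OF t s]
    have "EH_form t w $ j $ k = wirt j (wirtbar k (\<lambda>y. complex_of_real (EH_potential t y))) w"
      unfolding EH_form_def quarter_ddc_def by simp
    also have "\<dots> = wirt j (\<lambda>y. complex_of_real (bt t ((norm y)\<^sup>2)) * y $ k) w"
      by (rule wirt_local[OF So wS]) (rule wb)
    also have "\<dots> = complex_of_real (b1 t ((norm w)\<^sup>2)) * cnj (w $ j) * w $ k
                 + complex_of_real (bt t ((norm w)\<^sup>2)) * (if k = j then 1 else 0)"
      unfolding wirt_mult(1)[OF diff_radial[OF d] diff_nth(1)] wirt_radial(1)[OF d] wirt_nth by simp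
    also have "\<dots> = Hm t w $ j $ k" unfolding Hm_nth by auto
    finally show ?thesis .
  qed
  thus ?thesis by (simp add: vec_eq_iff)
qed



lemma Hm_det: "det (Hm t w) = complex_of_real (bt t ((norm w)\<^sup>2) * (bt t ((norm w)\<^sup>2) + b1 t ((norm w)\<^sup>2) * (norm w)\<^sup>2))"
proof -
  let ?a = "complex_of_real (bt t ((norm w)\<^sup>2))" and ?b = "complex_of_real (b1 t ((norm w)\<^sup>2))"
  have "det (Hm t w) = (?a + cnj (w$1) * w$1 * ?b) * (?a + cnj (w$2) * w$2 * ?b) - (cnj (w$1) * w$2 * ?b) * (cnj (w$2) * w$1 * ?b)"
    unfolding det_2 Hm_nth by simp
  also have "\<dots> = ?a * ?a + ?a * ?b * (cnj (w$1) * w$1 + cnj (w$2) * w$2)"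
    by (simp add: algebra_simps)
  also have "cnj (w$1) * w$1 + cnj (w$2) * w$2 = complex_of_real ((norm w)\<^sup>2)"
    unfolding cnj_self nsq2 by simp
  finally show ?thesis by (simp add: algebra_simps)
qed

lemma Hm_wedge: assumes t: "t > 0" and w: "w \<noteq> 0"
  shows "wedge_sq_ratio (Hm t) w = 2 * Dv ((norm w)\<^sup>2 / t\<^sup>2)"
proof -
  let ?s = "(norm w)\<^sup>2 / t\<^sup>2"
  have s: "?s > 0" using t w by simp
  have "bt t ((norm w)\<^sup>2) + b1 t ((norm w)\<^sup>2) * (norm w)\<^sup>2 = alpha Ac ?s + ?s * alpha1 Ac ?s"
    unfolding bt_def b1_def by (simp add: field_simps)
  also have "\<dots> = G1 Ac ?s" by (rule alpha_G1[OF Ac_pos s])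
  finally show ?thesis unfolding wedge_sq_ratio_def Hm_det Dv_def bt_def by simp
qed

lemma Hm_quad:
  "(\<Sum>j\<in>UNIV. \<Sum>k\<in>UNIV. Hm t w $ j $ k * v $ j * cnj (v $ k))
   = complex_of_real (bt t ((norm w)\<^sup>2) * ((cmod (v$1))\<^sup>2 + (cmod (v$2))\<^sup>2)
       + b1 t ((norm w)\<^sup>2) * (cmod (cnj (w$1) * v$1 + cnj (w$2) * v$2))\<^sup>2)"
proof -
  let ?a = "complex_of_real (bt t ((norm w)\<^sup>2))" and ?b = "complex_of_real (b1 t ((norm w)\<^sup>2))"
  let ?z = "cnj (w$1) * v$1 + cnj (w$2) * v$2"
  have "(\<Sum>j\<in>UNIV. \<Sum>k\<in>UNIV. Hm t w $ j $ k * v $ j * cnj (v $ k))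
     = ?a * (v$1 * cnj (v$1) + v$2 * cnj (v$2)) + ?b * (?z * cnj ?z)"
    unfolding sum_2 Hm_nth by (simp add: algebra_simps)
  also have "\<dots> = ?a * complex_of_real ((cmod (v$1))\<^sup>2 + (cmod (v$2))\<^sup>2) + ?b * complex_of_real ((cmod ?z)\<^sup>2)"
    unfolding complex_norm_square[of "v$1", symmetric] complex_norm_square[of "v$2", symmetric] complex_norm_square[of ?z, symmetric] by simp
  finally show ?thesis by simp
qed

lemma CS2: "(cmod (cnj a * x + cnj b * y))\<^sup>2 \<le> ((cmod a)\<^sup>2 + (cmod b)\<^sup>2) * ((cmod x)\<^sup>2 + (cmod y)\<^sup>2)"
proof -
  have "cmod (cnj a * x + cnj b * y) \<le> cmod a * cmod x + cmod b * cmod y"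
    using norm_triangle_ineq[of "cnj a * x" "cnj b * y"] by (simp add: norm_mult)
  hence "(cmod (cnj a * x + cnj b * y))\<^sup>2 \<le> (cmod a * cmod x + cmod b * cmod y)\<^sup>2"
    by (intro power_mono) auto
  also have "\<dots> \<le> ((cmod a)\<^sup>2 + (cmod b)\<^sup>2) * ((cmod x)\<^sup>2 + (cmod y)\<^sup>2)"
  proof -
    have "0 \<le> (cmod a * cmod y - cmod b * cmod x)\<^sup>2" by simp
    thus ?thesis by (simp add: algebra_simps power2_eq_square)
  qed
  finally show ?thesis .
qed

lemma Hm_pos: assumes t: "t > 0" shows "positive_form11_on (- {0}) (Hm t)"
  unfolding positive_form11_on_def
proof (intro ballI allI impI)
  fix x :: cv and v :: cv assume x: "x \<in> - {0}" and v: "v \<noteq> 0"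
  let ?s = "(norm x)\<^sup>2 / t\<^sup>2"
  have s: "?s > 0" using t x by simp
  let ?a = "bt t ((norm x)\<^sup>2)" and ?b = "b1 t ((norm x)\<^sup>2)"
  let ?V = "(cmod (v$1))\<^sup>2 + (cmod (v$2))\<^sup>2" and ?Z = "(cmod (cnj (x$1) * v$1 + cnj (x$2) * v$2))\<^sup>2"
  have V: "?V > 0"
  proof -
    have "v$1 \<noteq> 0 \<or> v$2 \<noteq> 0" using v by (auto simp: vec_eq_iff forall_2)
    thus ?thesis by (auto simp: add_pos_nonneg add_nonneg_pos)
  qed
  have Z: "?Z \<le> (norm x)\<^sup>2 * ?V" unfolding nsq2 by (rule CS2)
  have a: "?a > 0" unfolding bt_def using alpha_ge1[OF s Ac_pos] by simp
  have ab: "?a + ?b * (norm x)\<^sup>2 > 0"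
  proof -
    have "?a + ?b * (norm x)\<^sup>2 = alpha Ac ?s + ?s * alpha1 Ac ?s"
      unfolding bt_def b1_def by (simp add: field_simps)
    also have "\<dots> = G1 Ac ?s" by (rule alpha_G1[OF Ac_pos s])
    finally show ?thesis using G1_pos[OF s] by simp
  qed
  have "?a * ?V + ?b * ?Z > 0"
  proof (cases "?b \<ge> 0")
    case True
    have "?a * ?V > 0" using a V by simp
    moreover have "?b * ?Z \<ge> 0" using True by simp
    ultimately show ?thesis by linarith
  next
    case False
    have "?b * ?Z \<ge> ?b * ((norm x)\<^sup>2 * ?V)" using False Z by (intro mult_left_mono_neg) auto
    moreover have "(?a + ?b * (norm x)\<^sup>2) * ?V > 0" using ab V by simp
    ultimately show ?thesis by (simp add: algebra_simps)
  qed
  thus "0 < Re (\<Sum>j\<in>UNIV. \<Sum>k\<in>UNIV. Hm t x $ j $ k * v $ j * cnj (v $ k))"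
    unfolding Hm_quad by simp
qed

lemma Hm_real: "real_form11_on S (Hm t)"
  unfolding real_form11_on_def Hm_nth by auto

lemma Hm_pm: "pm_invariant (Hm t)"
  unfolding pm_invariant_def by (simp add: vec_eq_iff Hm_nth)

lemma Hm_flat: assumes t: "t > 0" and w: "(norm w)\<^sup>2 > 2 * Ac * t\<^sup>2"
  shows "Hm t w = flat_form w"
proof -
  have s: "(norm w)\<^sup>2 / t\<^sup>2 > 2 * Ac" using w t by (simp add: field_simps)
  have "bt t ((norm w)\<^sup>2) = 1" unfolding bt_def using alpha_large[of Ac] s Ac_pos by simp
  moreover have "b1 t ((norm w)\<^sup>2) = 0" unfolding b1_def using alpha1_large[OF s Ac_pos] by simp
  ultimately show ?thesis unfolding flat_form_def by (simp add: vec_eq_iff Hm_nth mat_def)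
qed



theorem proposition6p3:
  shows "\<exists>R::real. R > 0 \<and> (\<exists>\<upsilon>::real. 0 < \<upsilon> \<and> \<upsilon> < 1 \<and>
    (\<forall>t::real. t > 0 \<longrightarrow>
      (\<exists>H :: complex^2 \<Rightarrow> complex^2^2.
         closed_form11_on (- {0}) H \<and> real_form11_on (- {0}) H \<and>
         positive_form11_on (- {0}) H \<and> pm_invariant H \<and>
         (\<forall>w. w \<noteq> 0 \<and> norm w \<le> t * R / 2 \<longrightarrow> H w = EH_form t w) \<and>
         (\<exists>U. open U \<and> {w. norm w \<ge> t * R} \<subseteq> U \<and>
              (\<forall>w\<in>U. w \<noteq> 0 \<longrightarrow> H w = flat_form w)) \<and>
         (\<forall>w. w \<noteq> 0 \<longrightarrow> wedge_sq_ratio H w \<ge> 2 * \<upsilon>\<^sup>2) \<and>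
         (\<exists>\<rr>. t * R / 2 < \<rr> \<and> \<rr> < t * R \<and>
              (\<forall>w. norm w = \<rr> \<longrightarrow> wedge_sq_ratio H w = 2 * \<upsilon>\<^sup>2)))))"
proof -
  obtain s0 where s0: "Ac \<le> s0" "s0 \<le> 2 * Ac" "0 < Dv s0" "Dv s0 < 1" "\<forall>s>0. Dv s0 \<le> Dv s"
    using Dv_min by blast
  define R where "R = sqrt (3 * Ac)"
  define u where "u = sqrt (Dv s0)"
  have A: "Ac > 0" by (rule Ac_pos)
  have R: "R > 0" unfolding R_def using A by simp
  have u: "0 < u" "u < 1" "u\<^sup>2 = Dv s0" unfolding u_def using s0 by auto
  have R2: "R\<^sup>2 = 3 * Ac" unfolding R_def using A by simp
  have main: "\<exists>H :: complex^2 \<Rightarrow> complex^2^2.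
         closed_form11_on (- {0}) H \<and> real_form11_on (- {0}) H \<and>
         positive_form11_on (- {0}) H \<and> pm_invariant H \<and>
         (\<forall>w. w \<noteq> 0 \<and> norm w \<le> t * R / 2 \<longrightarrow> H w = EH_form t w) \<and>
         (\<exists>U. open U \<and> {w. norm w \<ge> t * R} \<subseteq> U \<and>
              (\<forall>w\<in>U. w \<noteq> 0 \<longrightarrow> H w = flat_form w)) \<and>
         (\<forall>w. w \<noteq> 0 \<longrightarrow> wedge_sq_ratio H w \<ge> 2 * u\<^sup>2) \<and>
         (\<exists>\<rr>. t * R / 2 < \<rr> \<and> \<rr> < t * R \<and>
              (\<forall>w. norm w = \<rr> \<longrightarrow> wedge_sq_ratio H w = 2 * u\<^sup>2))" if t: "t > 0" for t
  proof (intro exI[of _ "Hm t"] conjI allI impI)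
    show "closed_form11_on (- {0}) (Hm t)" by (rule Hm_closed[OF t])
    show "real_form11_on (- {0}) (Hm t)" by (rule Hm_real)
    show "positive_form11_on (- {0}) (Hm t)" by (rule Hm_pos[OF t])
    show "pm_invariant (Hm t)" by (rule Hm_pm)
  next
    fix w :: cv assume w: "w \<noteq> 0 \<and> norm w \<le> t * R / 2"
    have "(norm w)\<^sup>2 \<le> (t * R / 2)\<^sup>2" using w by (intro power_mono) auto
    also have "\<dots> = t\<^sup>2 * (3 * Ac) / 4" using R2 by (simp add: power_mult_distrib power_divide)
    also have "\<dots> < Ac * t\<^sup>2" using A t by simp
    finally show "Hm t w = EH_form t w" using EH_eq[OF t] w by simp
  next
    fix w :: cv assume w: "w \<noteq> 0"
    have s: "(norm w)\<^sup>2 / t\<^sup>2 > 0" using w t by simp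
    show "2 * u\<^sup>2 \<le> wedge_sq_ratio (Hm t) w"
      unfolding Hm_wedge[OF t w] u(3) using s0(5) s by simp
  next
    let ?c = "t * sqrt (5 / 2 * Ac)"
    have c0: "?c \<ge> 0" using t A by simp
    have cR: "?c < t * R" unfolding R_def using t A by simp
    show "\<exists>U. open U \<and> {w. norm w \<ge> t * R} \<subseteq> U \<and> (\<forall>w\<in>U. w \<noteq> 0 \<longrightarrow> Hm t w = flat_form w)"
    proof (intro exI[of _ "- cball 0 ?c"] conjI ballI impI)
      show "open (- cball (0::cv) ?c)" by auto
      show "{w. t * R \<le> norm w} \<subseteq> - cball (0::cv) ?c" using cR by auto
    next
      fix w :: cv assume "w \<in> - cball 0 ?c"
      hence "norm w > ?c" by auto
      hence "(norm w)\<^sup>2 > ?c\<^sup>2" using c0 by (intro power_strict_mono) auto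
      moreover have "?c\<^sup>2 = t\<^sup>2 * (5 / 2 * Ac)" using A by (simp add: power_mult_distrib)
      moreover have "t\<^sup>2 * (5 / 2 * Ac) > 2 * Ac * t\<^sup>2" using A t by simp
      ultimately have "(norm w)\<^sup>2 > 2 * Ac * t\<^sup>2" by linarith
      thus "Hm t w = flat_form w" using Hm_flat[OF t] by simp
    qed
  next
    show "\<exists>\<rr>. t * R / 2 < \<rr> \<and> \<rr> < t * R \<and> (\<forall>w. norm w = \<rr> \<longrightarrow> wedge_sq_ratio (Hm t) w = 2 * u\<^sup>2)"
    proof (intro exI[of _ "t * sqrt s0"] conjI allI impI)
      have "sqrt (3 * Ac) / 2 = sqrt (3 * Ac / 4)" by (simp add: real_sqrt_divide)
      also have "\<dots> < sqrt s0" using s0 A by simp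
      finally show "t * R / 2 < t * sqrt s0" unfolding R_def using t by simp
      show "t * sqrt s0 < t * R" unfolding R_def using t s0 A by simp
    next
      fix w :: cv assume w: "norm w = t * sqrt s0"
      have s0p: "s0 > 0" using s0 A by simp
      hence "w \<noteq> 0" using w t by auto
      moreover have "(norm w)\<^sup>2 / t\<^sup>2 = s0" using w t s0p by (simp add: power_mult_distrib)
      ultimately show "wedge_sq_ratio (Hm t) w = 2 * u\<^sup>2" using Hm_wedge[OF t] u(3) by simp
    qed
  qed
  show ?thesis using R u main by blast
qed

end
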